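(* Consider the waning-immunity model described in the context. There exists $\delta_o>0$ (depending on the other parameters) such that for all $0\le\delta\le\delta_o$: if $(\omega_n+\mu)(\mu+r)>\beta_0\omega_n+\beta_n\mu$, then the system has no realistic endemic equilibrium (i.e. no equilibrium with $I^*\in(0,1]$); and if $(\omega_n+\mu)(\mu+r)<\beta_0\omega_n+\beta_n\mu$, then the system has exactly one endemic equilibrium with $I^*\in(0,1]$.
   Context: Model: Fix an integer $n\ge 1$ and parameters $\delta\ge 0$ (rate of waning immunity), $\omega\ge 0$ (vaccination rate), $r>0$ (recovery rate), $\mu>0$ (birth = death rate), coverages $p_0=0$, $p_1,\dots,p_n\in[0,1]$, and transmission rates $0\le\beta_0\le\beta_1\le\dots\le\beta_n$ with $\beta_0<\beta_n$. Write $\omega_i=p_i\omega$, $\delta_i=(1-p_i)\delta$ (so $\delta_0=\delta$). The ODE system for $(S_0,\dots,S_n,I)$ is $$S_0'=\sum_{i=1}^n\omega_iS_i-\delta S_0+rI-\beta_0IS_0-\mu S_0,$$ $$S_i'=-\omega_iS_i+\delta_{i-1}S_{i-1}-\delta_iS_i-\beta_iIS_i-\mu S_i\quad(1\le i\le n-1),$$ $$S_n'=\mu-\omega_nS_n+\delta_{n-1}S_{n-1}-\beta_nIS_n-\mu S_n,$$ $$I'=I\sum_{i=0}^n\beta_iS_i-rI-\mu I,$$ with the normalization $\sum_iS_i+I=1$. An endemic equilibrium is an equilibrium $(S_0^*,\dots,S_n^*,I^* )$ of this system satisfying the normalization with $I^*\neq0$. *)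

theory Defs
  imports Complex_Main
begin

text \<open>Compartments S_0..S_n are given by a function
  S :: nat => real (only indices 0..n matter). The vaccination rate of class i is
  omega_i = p i * omega, the waning rate is delta_i = (1 - p i) * delta.\<close>

definition wi_equilibrium ::
  "nat \<Rightarrow> real \<Rightarrow> real \<Rightarrow> real \<Rightarrow> real \<Rightarrow> (nat \<Rightarrow> real) \<Rightarrow> (nat \<Rightarrow> real)
     \<Rightarrow> (nat \<Rightarrow> real) \<Rightarrow> real \<Rightarrow> bool" where
  "wi_equilibrium n \<delta> \<omega> r \<mu> p \<beta> S I \<longleftrightarrow>
     (\<Sum>i\<le>n. S i) + I = 1 \<and>
     (\<Sum>i=1..n. p i * \<omega> * S i) - \<delta> * S 0 + r * I - \<beta> 0 * I * S 0 - \<mu> * S 0 = 0 \<and>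
     (\<forall>i. 1 \<le> i \<and> i \<le> n - 1 \<longrightarrow>
        - (p i * \<omega>) * S i + (1 - p (i - 1)) * \<delta> * S (i - 1) - (1 - p i) * \<delta> * S i
        - \<beta> i * I * S i - \<mu> * S i = 0) \<and>
     \<mu> - p n * \<omega> * S n + (1 - p (n - 1)) * \<delta> * S (n - 1) - \<beta> n * I * S n - \<mu> * S n = 0 \<and>
     I * (\<Sum>i\<le>n. \<beta> i * S i) - r * I - \<mu> * I = 0"

definition wi_endemic_equilibrium ::
  "nat \<Rightarrow> real \<Rightarrow> real \<Rightarrow> real \<Rightarrow> real \<Rightarrow> (nat \<Rightarrow> real) \<Rightarrow> (nat \<Rightarrow> real)
     \<Rightarrow> (nat \<Rightarrow> real) \<Rightarrow> real \<Rightarrow> bool" where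
  "wi_endemic_equilibrium n \<delta> \<omega> r \<mu> p \<beta> S I \<longleftrightarrow>
     wi_equilibrium n \<delta> \<omega> r \<mu> p \<beta> S I \<and> I \<noteq> 0"

end

theory Submission
  imports Defs
begin


lemma chain_bound:
  fixes a x y :: "nat \<Rightarrow> real" and \<mu> :: real
  assumes "\<And>i. 1 \<le> i \<Longrightarrow> i \<le> m \<Longrightarrow> (a i + \<mu>) * \<bar>x i\<bar> \<le> a (i-1) * \<bar>x (i-1)\<bar> + y i"
  shows "\<mu> * (\<Sum>i=1..m. \<bar>x i\<bar>) + a m * \<bar>x m\<bar> \<le> a 0 * \<bar>x 0\<bar> + (\<Sum>i=1..m. y i)"
  using assms
proof (induction m)
  case 0 then show ?case by simp
next
  case (Suc m)
  have IH: "\<mu> * (\<Sum>i=1..m. \<bar>x i\<bar>) + a m * \<bar>x m\<bar> \<le> a 0 * \<bar>x 0\<bar> + (\<Sum>i=1..m. y i)"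
    using Suc by auto
  have st: "(a (Suc m) + \<mu>) * \<bar>x (Suc m)\<bar> \<le> a m * \<bar>x m\<bar> + y (Suc m)"
    using Suc.prems[of "Suc m"] by simp
  show ?case using IH st by (simp add: algebra_simps)
qed

lemma sum_split_le:
  fixes f :: "nat \<Rightarrow> 'a::comm_monoid_add"
  assumes "n \<ge> 1"
  shows "(\<Sum>i\<le>n. f i) = f 0 + (\<Sum>i\<in>{1..<n}. f i) + f n"
proof -
  have "{..n} = insert 0 (insert n {1..<n})" using assms by auto
  then show ?thesis using assms by (simp add: add.commute add.left_commute)
qed

lemma sum_split_1n:
  fixes f :: "nat \<Rightarrow> 'a::comm_monoid_add"
  assumes "n \<ge> 1"
  shows "(\<Sum>i=1..n. f i) = (\<Sum>i\<in>{1..<n}. f i) + f n"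
proof -
  have "{1..n} = insert n {1..<n}" using assms by auto
  then show ?thesis by (simp add: add.commute)
qed

lemma telescope1:
  fixes g :: "nat \<Rightarrow> real"
  shows "(\<Sum>i\<in>{1..<Suc m}. g (i-1) - g i) = g 0 - g m"
  by (induction m) (auto simp: algebra_simps)




lemma aux_lin1: "a \<le> b \<Longrightarrow> w = 2*b + 2*z \<Longrightarrow> 0 \<le> z \<Longrightarrow> a + b + z \<le> (w::real)"
  by linarith

lemma macro1:
  fixes b0 B wn \<mu> \<delta> I s u M A e1 e2 :: real
  assumes h: "0 \<le> b0" "b0 \<le> B" "0 \<le> wn" "0 < \<mu>" "0 \<le> \<delta>" "\<delta> \<le> \<mu>/2" "0 \<le> I" "I \<le> 1"
    and N: "s + M + u + I = 1" and U: "u * (wn + B*I + \<mu>) = \<mu> + e2"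
    and MA: "\<bar>M\<bar> \<le> A" and EA: "\<bar>e1\<bar> \<le> B*A" and CH: "\<mu>*A + \<bar>e2\<bar> \<le> \<delta>*\<bar>s\<bar>"
  shows "\<bar>s\<bar> \<le> 2"
    and "\<bar>b0*s + e1 + B*u - (b0*(1-I) + (B-b0)*\<mu>/(wn+B*I+\<mu>))\<bar> \<le> 4*B*\<delta>/\<mu>"
proof -
  define D where "D = wn + B*I + \<mu>"
  have Dpos: "D \<ge> \<mu>" using h unfolding D_def by simp
  have D0: "D > 0" using Dpos h by simp
  have u: "u = \<mu>/D + e2/D" using U D0 unfolding D_def[symmetric] by (simp add: field_simps)
  have q: "0 < \<mu>/D" "\<mu>/D \<le> 1" using Dpos D0 h(4) by (simp_all add: divide_pos_pos)
  have e2D: "\<bar>e2/D\<bar> \<le> \<bar>e2\<bar>/\<mu>"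
  proof -
    have "\<bar>e2/D\<bar> = \<bar>e2\<bar>/D" by (rule abs_div_pos[OF D0, symmetric])
    also have "\<dots> \<le> \<bar>e2\<bar>/\<mu>" using Dpos h(4) by (intro divide_left_mono) auto
    finally show ?thesis .
  qed
  have A0: "0 \<le> A" using MA by linarith
  have "s = (1 - I - \<mu>/D) - e2/D - M" using N u by simp
  moreover have "\<bar>1 - I - \<mu>/D\<bar> \<le> 1" using q h(7,8) by (simp add: abs_le_iff)
  ultimately have "\<bar>s\<bar> \<le> 1 + \<bar>e2\<bar>/\<mu> + A"
    using e2D MA abs_triangle_ineq4[of "1 - I - \<mu>/D - e2/D" M] abs_triangle_ineq4[of "1 - I - \<mu>/D" "e2/D"] by linarith
  moreover have "\<bar>e2\<bar>/\<mu> + A \<le> \<delta>*\<bar>s\<bar>/\<mu>"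
  proof -
    have "\<bar>e2\<bar>/\<mu> + A = (\<mu>*A + \<bar>e2\<bar>)/\<mu>" using h by (simp add: field_simps)
    also have "\<dots> \<le> \<delta>*\<bar>s\<bar>/\<mu>" using CH h by (simp add: divide_right_mono)
    finally show ?thesis .
  qed
  moreover have "\<delta>*\<bar>s\<bar>/\<mu> \<le> \<bar>s\<bar>/2"
  proof -
    have "\<delta>*\<bar>s\<bar> \<le> (\<mu>/2)*\<bar>s\<bar>" using h(6) by (intro mult_right_mono) auto
    then show ?thesis using h by (simp add: field_simps)
  qed
  ultimately show s2: "\<bar>s\<bar> \<le> 2" by linarith
  have eq: "b0*s + e1 + B*u - (b0*(1-I) + (B-b0)*\<mu>/D) = - b0*M + e1 + (B-b0)*(e2/D)"
  proof -
    have "s = 1 - I - M - (\<mu>/D + e2/D)" using N u by simp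
    then have "b0*s + e1 + B*u - (b0*(1-I) + (B-b0)*\<mu>/D) = b0*(1 - I - M - (\<mu>/D + e2/D)) + e1 + B*(\<mu>/D + e2/D) - (b0*(1-I) + (B-b0)*\<mu>/D)"
      using u by simp
    also have "\<dots> = - b0*M + e1 + (B-b0)*(e2/D)" using D0 by (simp add: field_simps)
    finally show ?thesis .
  qed
  have "\<bar>- b0*M + e1 + (B-b0)*(e2/D)\<bar> \<le> b0*A + B*A + B*(\<bar>e2\<bar>/\<mu>)"
  proof -
    have "\<bar>b0*M\<bar> \<le> b0*A" using MA h by (simp add: abs_mult mult_left_mono)
    moreover have "\<bar>(B-b0)*(e2/D)\<bar> \<le> B*(\<bar>e2\<bar>/\<mu>)"
    proof -
      have "\<bar>(B-b0)*(e2/D)\<bar> = (B-b0)*\<bar>e2/D\<bar>" using h by (simp add: abs_mult)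
      also have "\<dots> \<le> B*(\<bar>e2\<bar>/\<mu>)" using e2D h
        by (intro mult_mono) auto
      finally show ?thesis .
    qed
    ultimately show ?thesis using EA abs_triangle_ineq[of "- b0*M + e1" "(B-b0)*(e2/D)"]
       abs_triangle_ineq[of "- b0*M" "e1"] by simp
  qed
  also have "\<dots> \<le> (2*B/\<mu>)*(\<mu>*A + \<bar>e2\<bar>)"
  proof -
    have "b0*A \<le> B*A" using h A0 by (simp add: mult_right_mono)
    moreover have "(2*B/\<mu>)*(\<mu>*A + \<bar>e2\<bar>) = 2*(B*A) + 2*(B*(\<bar>e2\<bar>/\<mu>))" using h by (simp add: field_simps)
    moreover have "0 \<le> B*(\<bar>e2\<bar>/\<mu>)" using h by simp
    ultimately show ?thesis by (rule aux_lin1)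
  qed
  also have "\<dots> \<le> (2*B/\<mu>)*(\<delta>*2)"
  proof -
    have "\<delta>*\<bar>s\<bar> \<le> \<delta>*2" using s2 h by (simp add: mult_left_mono)
    then show ?thesis using CH h by (intro mult_left_mono) auto
  qed
  also have "\<dots> = 4*B*\<delta>/\<mu>" by simp
  finally show "\<bar>b0*s + e1 + B*u - (b0*(1-I) + (B-b0)*\<mu>/(wn+B*I+\<mu>))\<bar> \<le> 4*B*\<delta>/\<mu>"
    using eq unfolding D_def by simp
qed



lemma macro2:
  fixes b0 B wn \<mu> \<delta> r I I' s s' u u' M M' e1 e1' e2 e2' A A' Z W :: real
  assumes h: "0 \<le> b0" "b0 < B" "0 \<le> wn" "0 < \<mu>" "0 \<le> \<delta>" "\<delta> \<le> \<mu>/4"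
      "0 \<le> I" "I \<le> 1" "0 \<le> I'" "I' \<le> 1"
    and N: "s + M + u + I = 1" and N': "s' + M' + u' + I' = 1"
    and U: "u * (wn + B*I + \<mu>) = \<mu> + e2" and U': "u' * (wn + B*I' + \<mu>) = \<mu> + e2'"
    and F: "b0*s + e1 + B*u = r + \<mu>" and F': "b0*s' + e1' + B*u' = r + \<mu>"
    and s2: "\<bar>s\<bar> \<le> 2" and s2': "\<bar>s'\<bar> \<le> 2"
    and CH: "\<mu>*A + \<bar>e2\<bar> \<le> \<delta>*\<bar>s\<bar>" and CH': "\<mu>*A' + \<bar>e2'\<bar> \<le> \<delta>*\<bar>s'\<bar>"
    and A0: "0 \<le> A" and A0': "0 \<le> A'"
    and DM: "\<bar>M'-M\<bar> \<le> Z" and DE1: "\<bar>e1'-e1\<bar> \<le> B*Z" and DE2: "\<bar>e2'-e2\<bar> \<le> W"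
    and DC: "\<mu>*Z + W \<le> \<delta>*\<bar>s'-s\<bar> + B*\<bar>I'-I\<bar>*A'"
    and Z0: "0 \<le> Z" and W0: "0 \<le> W"
    and SM: "\<delta> * (2*(\<mu>*B + 2*(wn+B+\<mu>)*B)*(4*B+\<mu>)) < ((B-b0)*B*\<mu>/(2*(wn+B+\<mu>)) + \<mu>*b0)*\<mu>^2"
  shows "I' = I \<and> Z = 0 \<and> u' = u \<and> s' = s"
proof -
  define E where "E = wn+B+\<mu>"
  define D where "D = wn+B*I+\<mu>"
  define D' where "D' = wn+B*I'+\<mu>"
  define c1 where "c1 = (B-b0)*B*\<mu>/(2*E) + \<mu>*b0"
  define dI where "dI = \<bar>I'-I\<bar>"
  define X where "X = \<mu>*Z + W"
  have B0: "0 < B" using h by linarith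
  have BI: "B*I \<le> B" "0 \<le> B*I" "B*I' \<le> B" "0 \<le> B*I'" using B0 h
    by (simp_all add: mult_left_le)
  have DD: "\<mu> \<le> D" "D \<le> E" "\<mu> \<le> D'" "D' \<le> E" unfolding D_def D'_def E_def using BI h by linarith+
  have E0: "0 < E" using DD h by linarith
  have e2s: "\<bar>e2\<bar> \<le> \<mu>/2"
  proof -
    have "\<delta>*\<bar>s\<bar> \<le> \<delta>*2" using s2 h by (intro mult_left_mono) auto
    then show ?thesis using CH A0 h(4,6) mult_nonneg_nonneg[of \<mu> A] by linarith
  qed
  have uD: "u*D = \<mu> + e2" using U unfolding D_def .
  have ulow: "\<mu>/(2*E) \<le> u"
  proof -
    have "\<mu>/2 \<le> u*D" using uD e2s by linarith
    have D0: "0 < D" using DD h by linarith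
    then have "u = (\<mu> + e2)/D" using uD by (simp add: field_simps)
    also have "(\<mu>/2)/E \<le> (\<mu>/2)/D" using DD D0 h by (intro divide_left_mono) auto
    moreover have "(\<mu>/2)/D \<le> (\<mu> + e2)/D" using e2s D0 by (intro divide_right_mono) auto
    ultimately show ?thesis by simp
  qed
  have u0: "0 \<le> u" using ulow E0 h by (smt (verit) divide_pos_pos)
  have uup: "u \<le> 3/2"
  proof -
    have "u*\<mu> \<le> u*D" using u0 DD by (intro mult_left_mono) auto
    then have "u*\<mu> \<le> (3/2)*\<mu>" using uD e2s by linarith
    then show ?thesis using h(4) by simp
  qed
  have h1: "(B-b0)*(u'-u) = b0*(I'-I) + b0*(M'-M) - (e1'-e1)" using F F' N N' by algebra
  have h2: "D'*(u'-u) = (e2'-e2) - u*B*(I'-I)" using U U' unfolding D'_def by algebra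
  have h3: "(I'-I)*((B-b0)*u*B + D'*b0) = (B-b0)*(e2'-e2) - D'*b0*(M'-M) + D'*(e1'-e1)"
    using h1 h2 by algebra
  define C where "C = (B-b0)*u*B + D'*b0"
  have Cc: "c1 \<le> C"
  proof -
    have "(B-b0)*B*\<mu>/(2*E) = ((B-b0)*B)*(\<mu>/(2*E))" by simp
    also have "\<dots> \<le> ((B-b0)*B)*u" using ulow h B0 by (intro mult_left_mono) auto
    finally have a: "(B-b0)*B*\<mu>/(2*E) \<le> (B-b0)*u*B" by (simp add: algebra_simps)
    have b: "\<mu>*b0 \<le> D'*b0" using DD h by (intro mult_right_mono) auto
    show ?thesis using a b unfolding c1_def C_def by linarith
  qed
  have c1pos: "0 < c1"
  proof -
    have "0 < (B-b0)*B*\<mu>/(2*E)" using h B0 E0 by simp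
    moreover have "0 \<le> \<mu>*b0" using h by simp
    ultimately show ?thesis unfolding c1_def by linarith
  qed
  have rhs: "C*dI \<le> B*W + 2*E*B*Z"
  proof -
    have "C*dI = \<bar>(I'-I)*C\<bar>" using Cc c1pos unfolding dI_def by (simp add: abs_mult)
    also have "\<dots> = \<bar>(B-b0)*(e2'-e2) - D'*b0*(M'-M) + D'*(e1'-e1)\<bar>" using h3 unfolding C_def by simp
    also have "\<dots> \<le> \<bar>(B-b0)*(e2'-e2)\<bar> + \<bar>D'*b0*(M'-M)\<bar> + \<bar>D'*(e1'-e1)\<bar>" by linarith
    also have "\<dots> \<le> B*W + E*B*Z + E*(B*Z)"
    proof -
      have D0: "0 \<le> D'" using DD h by linarith
      have "\<bar>(B-b0)*(e2'-e2)\<bar> = (B-b0)*\<bar>e2'-e2\<bar>" using h by (simp add: abs_mult)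
      also have "\<dots> \<le> B*W" using DE2 h W0 by (intro mult_mono) auto
      finally have x1: "\<bar>(B-b0)*(e2'-e2)\<bar> \<le> B*W" .
      have "\<bar>D'*b0*(M'-M)\<bar> = (D'*b0)*\<bar>M'-M\<bar>" using D0 h by (simp add: abs_mult)
      also have "\<dots> \<le> (E*B)*Z" using DM DD D0 h Z0 by (intro mult_mono mult_mono') auto
      finally have x2: "\<bar>D'*b0*(M'-M)\<bar> \<le> E*B*Z" .
      have "\<bar>D'*(e1'-e1)\<bar> = D'*\<bar>e1'-e1\<bar>" using D0 by (simp add: abs_mult)
      also have "\<dots> \<le> E*(B*Z)" using DE1 DD D0 B0 Z0 by (intro mult_mono) auto
      finally have x3: "\<bar>D'*(e1'-e1)\<bar> \<le> E*(B*Z)" .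
      show ?thesis using x1 x2 x3 by linarith
    qed
    also have "\<dots> = B*W + 2*E*B*Z" by simp
    finally show ?thesis .
  qed
  have du: "\<mu>*\<bar>u'-u\<bar> \<le> W + 2*B*dI"
  proof -
    have "\<mu>*\<bar>u'-u\<bar> \<le> D'*\<bar>u'-u\<bar>" using DD by (intro mult_right_mono) auto
    also have "\<dots> = \<bar>D'*(u'-u)\<bar>" using DD h(4) by (simp add: abs_mult)
    also have "\<dots> = \<bar>(e2'-e2) - u*B*(I'-I)\<bar>" using h2 by simp
    also have "\<dots> \<le> W + u*B*dI"
    proof -
      have "\<bar>u*B*(I'-I)\<bar> = u*B*dI" using u0 B0 unfolding dI_def by (simp add: abs_mult)
      then show ?thesis using DE2 abs_triangle_ineq4[of "e2'-e2" "u*B*(I'-I)"] by linarith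
    qed
    also have "\<dots> \<le> W + 2*B*dI"
    proof -
      have "u*B*dI \<le> 2*B*dI" using uup B0 unfolding dI_def by (intro mult_right_mono) auto
      then show ?thesis by simp
    qed
    finally show ?thesis .
  qed
  have ds: "\<mu>*\<bar>s'-s\<bar> \<le> X + (2*B+\<mu>)*dI"
  proof -
    have "s'-s = -((M'-M) + (u'-u) + (I'-I))" using N N' by simp
    then have "\<bar>s'-s\<bar> \<le> Z + \<bar>u'-u\<bar> + dI" using DM unfolding dI_def by simp
    then have "\<mu>*\<bar>s'-s\<bar> \<le> \<mu>*(Z + \<bar>u'-u\<bar> + dI)" using h by (intro mult_left_mono) auto
    then show ?thesis using du unfolding X_def by (simp add: algebra_simps)
  qed
  have dA: "\<mu>*A' \<le> 2*\<delta>"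
  proof -
    have "\<delta>*\<bar>s'\<bar> \<le> \<delta>*2" using s2' h by (intro mult_left_mono) auto
    then show ?thesis using CH' by linarith
  qed
  have dI0: "0 \<le> dI" unfolding dI_def by simp
  have muX: "\<mu>*X \<le> 2*\<delta>*(4*B+\<mu>)*dI"
  proof -
    have "\<mu>*X \<le> \<mu>*(\<delta>*\<bar>s'-s\<bar> + B*dI*A')" using DC h unfolding X_def dI_def by (intro mult_left_mono) auto
    also have "\<dots> = \<delta>*(\<mu>*\<bar>s'-s\<bar>) + B*dI*(\<mu>*A')" by (simp add: algebra_simps)
    also have "\<dots> \<le> \<delta>*(X + (2*B+\<mu>)*dI) + B*dI*(2*\<delta>)"
    proof -
      have "\<delta>*(\<mu>*\<bar>s'-s\<bar>) \<le> \<delta>*(X + (2*B+\<mu>)*dI)" using ds h by (intro mult_left_mono) auto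
      moreover have "B*dI*(\<mu>*A') \<le> B*dI*(2*\<delta>)" using dA B0 dI0 by (intro mult_left_mono) auto
      ultimately show ?thesis by linarith
    qed
    also have "\<dots> = \<delta>*X + \<delta>*(4*B+\<mu>)*dI" by (simp add: algebra_simps)
    finally have a: "\<mu>*X \<le> \<delta>*X + \<delta>*(4*B+\<mu>)*dI" .
    have X0: "0 \<le> X" unfolding X_def using h Z0 W0 by simp
    have "\<delta>*X \<le> (\<mu>/4)*X" using h X0 by (intro mult_right_mono) auto
    then have "(3/4)*(\<mu>*X) \<le> \<delta>*(4*B+\<mu>)*dI" using a by simp
    moreover have "0 \<le> \<delta>*(4*B+\<mu>)*dI" using h B0 dI0 by simp
    ultimately show ?thesis by simp
  qed
  have key: "c1*\<mu>^2*dI \<le> \<delta> * (2*(\<mu>*B + 2*E*B)*(4*B+\<mu>)) * dI"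
  proof -
    have "c1*(dI*\<mu>^2) \<le> C*(dI*\<mu>^2)" using Cc dI0 by (intro mult_right_mono) auto
    then have "c1*\<mu>^2*dI \<le> C*dI*\<mu>^2" by (simp add: algebra_simps)
    also have "\<dots> \<le> (B*W + 2*E*B*Z)*\<mu>^2" using rhs by (intro mult_right_mono) auto
    also have "\<dots> = \<mu>*(\<mu>*(B*W + 2*E*B*Z))" by (simp add: power2_eq_square algebra_simps)
    also have "\<dots> \<le> \<mu>*((\<mu>*B + 2*E*B)*X)"
    proof -
      have "\<mu>*(B*W + 2*E*B*Z) \<le> (\<mu>*B + 2*E*B)*X"
      proof -
        have "(\<mu>*B + 2*E*B)*X = \<mu>*(B*W + 2*E*B*Z) + (\<mu>*\<mu>*B*Z + 2*E*B*W)"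
          unfolding X_def by (simp add: algebra_simps)
        moreover have "0 \<le> \<mu>*\<mu>*B*Z + 2*E*B*W" using h B0 E0 Z0 W0 by simp
        ultimately show ?thesis by linarith
      qed
      then show ?thesis using h by (intro mult_left_mono) auto
    qed
    also have "\<dots> = (\<mu>*B + 2*E*B)*(\<mu>*X)" by (simp add: algebra_simps)
    also have "\<dots> \<le> (\<mu>*B + 2*E*B)*(2*\<delta>*(4*B+\<mu>)*dI)" using muX h B0 E0 by (intro mult_left_mono) auto
    also have "\<dots> = \<delta> * (2*(\<mu>*B + 2*E*B)*(4*B+\<mu>)) * dI" by (simp add: algebra_simps)
    finally show ?thesis .
  qed
  have dIz: "dI = 0"
  proof (rule ccontr)
    assume "dI \<noteq> 0"
    then have "0 < dI" using dI0 by simp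
    then have "c1*\<mu>^2 \<le> \<delta> * (2*(\<mu>*B + 2*E*B)*(4*B+\<mu>))" using key by simp
    then show False using SM unfolding c1_def E_def by (simp add: algebra_simps)
  qed
  then have II: "I' = I" unfolding dI_def by simp
  have "\<mu>*X \<le> 0" using muX dIz by simp
  then have X0: "X \<le> 0" using h by (simp add: mult_le_0_iff)
  have mZ: "0 \<le> \<mu>*Z" using Z0 h by simp
  then have Wz: "W = 0" using X0 W0 unfolding X_def by linarith
  have "\<mu>*Z \<le> 0" using X0 W0 unfolding X_def by linarith
  then have Zz: "Z = 0" using Z0 h by (simp add: mult_le_0_iff)
  have "D'*(u'-u) = 0" using h2 DE2 Wz II by simp
  then have uu: "u' = u" using DD h by simp
  have "M' = M" using DM Zz by simp
  then have "s' = s" using N N' uu II by simp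
  then show ?thesis using II Zz uu by simp
qed


definition pre_eq :: "nat \<Rightarrow> real \<Rightarrow> real \<Rightarrow> real \<Rightarrow> (nat \<Rightarrow> real) \<Rightarrow> (nat \<Rightarrow> real)
     \<Rightarrow> (nat \<Rightarrow> real) \<Rightarrow> real \<Rightarrow> bool" where
  "pre_eq n \<delta> \<omega> \<mu> p \<beta> S I \<longleftrightarrow>
     (\<Sum>i\<le>n. S i) + I = 1 \<and>
     (\<forall>i. 1 \<le> i \<and> i \<le> n - 1 \<longrightarrow>
        - (p i * \<omega>) * S i + (1 - p (i - 1)) * \<delta> * S (i - 1) - (1 - p i) * \<delta> * S i
        - \<beta> i * I * S i - \<mu> * S i = 0) \<and>
     \<mu> - p n * \<omega> * S n + (1 - p (n - 1)) * \<delta> * S (n - 1) - \<beta> n * I * S n - \<mu> * S n = 0"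

lemma wi_pre: "wi_equilibrium n \<delta> \<omega> r \<mu> p \<beta> S I \<Longrightarrow> pre_eq n \<delta> \<omega> \<mu> p \<beta> S I"
  unfolding wi_equilibrium_def pre_eq_def by blast

locale wi =
  fixes n :: nat and \<omega> r \<mu> :: real and p \<beta> :: "nat \<Rightarrow> real"
  assumes n1: "n \<ge> 1" and om: "\<omega> \<ge> 0" and rpos: "r > 0" and mupos: "\<mu> > 0"
    and p0: "p 0 = 0" and pb: "\<forall>i\<in>{1..n}. 0 \<le> p i \<and> p i \<le> 1"
    and b0: "0 \<le> \<beta> 0" and bmono: "\<forall>i<n. \<beta> i \<le> \<beta> (Suc i)" and b0n: "\<beta> 0 < \<beta> n"
begin

lemma p_bnd: "i \<le> n \<Longrightarrow> 0 \<le> p i \<and> p i \<le> 1"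
  using pb p0 by (cases "i = 0") auto

lemma beta_up: "i + k \<le> n \<Longrightarrow> \<beta> i \<le> \<beta> (i + k)"
proof (induction k)
  case 0 then show ?case by simp
next
  case (Suc k)
  then have "\<beta> i \<le> \<beta> (i + k)" by simp
  also have "\<dots> \<le> \<beta> (Suc (i + k))" using bmono Suc.prems by auto
  finally show ?case by simp
qed

lemma beta_bnd: "i \<le> n \<Longrightarrow> 0 \<le> \<beta> i \<and> \<beta> i \<le> \<beta> n"
  using beta_up[of 0 i] beta_up[of i "n - i"] b0 by auto

lemma wn_nn: "0 \<le> p n * \<omega>" using p_bnd[of n] om by simp

lemma eq_facts:
  assumes pe: "pre_eq n \<delta> \<omega> \<mu> p \<beta> S I" and d0: "0 \<le> \<delta>" and I0: "0 \<le> I"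
  shows "S 0 + (\<Sum>i\<in>{1..<n}. S i) + S n + I = 1"
    and "S n * (p n * \<omega> + \<beta> n * I + \<mu>) = \<mu> + (1 - p (n - 1)) * \<delta> * S (n - 1)"
    and "\<bar>\<Sum>i\<in>{1..<n}. S i\<bar> \<le> (\<Sum>i\<in>{1..<n}. \<bar>S i\<bar>)"
    and "\<bar>\<Sum>i\<in>{1..<n}. \<beta> i * S i\<bar> \<le> \<beta> n * (\<Sum>i\<in>{1..<n}. \<bar>S i\<bar>)"
    and "\<mu> * (\<Sum>i\<in>{1..<n}. \<bar>S i\<bar>) + \<bar>(1 - p (n - 1)) * \<delta> * S (n - 1)\<bar> \<le> \<delta> * \<bar>S 0\<bar>"
    and "(\<Sum>i\<le>n. \<beta> i * S i) = \<beta> 0 * S 0 + (\<Sum>i\<in>{1..<n}. \<beta> i * S i) + \<beta> n * S n"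
proof -
  note pe' = pe[unfolded pre_eq_def]
  show "S 0 + (\<Sum>i\<in>{1..<n}. S i) + S n + I = 1"
    using pe' sum_split_le[OF n1, of S] by simp
  show "S n * (p n * \<omega> + \<beta> n * I + \<mu>) = \<mu> + (1 - p (n - 1)) * \<delta> * S (n - 1)"
    using pe' by (simp add: algebra_simps)
  show "\<bar>\<Sum>i\<in>{1..<n}. S i\<bar> \<le> (\<Sum>i\<in>{1..<n}. \<bar>S i\<bar>)" by (rule sum_abs)
  have "\<bar>\<Sum>i\<in>{1..<n}. \<beta> i * S i\<bar> \<le> (\<Sum>i\<in>{1..<n}. \<bar>\<beta> i * S i\<bar>)" by (rule sum_abs)
  also have "\<dots> \<le> (\<Sum>i\<in>{1..<n}. \<beta> n * \<bar>S i\<bar>)"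
  proof (rule sum_mono)
    fix i assume "i \<in> {1..<n}"
    then have "0 \<le> \<beta> i" "\<beta> i \<le> \<beta> n" using beta_bnd[of i] by auto
    then show "\<bar>\<beta> i * S i\<bar> \<le> \<beta> n * \<bar>S i\<bar>" by (simp add: abs_mult mult_right_mono)
  qed
  finally show "\<bar>\<Sum>i\<in>{1..<n}. \<beta> i * S i\<bar> \<le> \<beta> n * (\<Sum>i\<in>{1..<n}. \<bar>S i\<bar>)"
    by (simp add: sum_distrib_left)
  show "(\<Sum>i\<le>n. \<beta> i * S i) = \<beta> 0 * S 0 + (\<Sum>i\<in>{1..<n}. \<beta> i * S i) + \<beta> n * S n"
    using sum_split_le[OF n1, of "\<lambda>i. \<beta> i * S i"] by simp
  define a where "a i = (1 - p i) * \<delta>" for i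
  have step: "(a i + \<mu>) * \<bar>S i\<bar> \<le> a (i-1) * \<bar>S (i-1)\<bar> + 0" if "1 \<le> i" "i \<le> n - 1" for i
  proof -
    have ch: "(p i * \<omega> + a i + \<beta> i * I + \<mu>) * S i = a (i-1) * S (i-1)"
      using pe' that unfolding a_def by (auto simp: algebra_simps)
    have pi: "0 \<le> p i" "p i \<le> 1" "0 \<le> p (i-1)" "p (i-1) \<le> 1" using p_bnd[of i] p_bnd[of "i-1"] that by auto
    have bi: "0 \<le> \<beta> i" using beta_bnd[of i] that by auto
    have c1: "0 \<le> p i * \<omega>" using pi om by simp
    have c2: "0 \<le> \<beta> i * I" using bi I0 by simp
    have ai: "0 \<le> a i" "0 \<le> a (i-1)" using pi d0 unfolding a_def by auto
    have "(a i + \<mu>) * \<bar>S i\<bar> \<le> (p i * \<omega> + a i + \<beta> i * I + \<mu>) * \<bar>S i\<bar>"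
      using c1 c2 by (intro mult_right_mono) auto
    also have "\<dots> = \<bar>(p i * \<omega> + a i + \<beta> i * I + \<mu>) * S i\<bar>"
      using c1 c2 ai mupos by (simp add: abs_mult)
    also have "\<dots> = a (i-1) * \<bar>S (i-1)\<bar>" using ch ai by (simp add: abs_mult)
    finally show ?thesis by simp
  qed
  have cb: "\<mu> * (\<Sum>i=1..n-1. \<bar>S i\<bar>) + a (n-1) * \<bar>S (n-1)\<bar> \<le> a 0 * \<bar>S 0\<bar> + (\<Sum>i=1..n-1. 0)"
    by (rule chain_bound) (use step in auto)
  have "{1..n-1} = {1..<n}" using n1 by auto
  moreover have "a (n-1) * \<bar>S (n-1)\<bar> = \<bar>(1 - p (n - 1)) * \<delta> * S (n - 1)\<bar>"
    using p_bnd[of "n-1"] d0 unfolding a_def by (simp add: abs_mult)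
  moreover have "a 0 = \<delta>" unfolding a_def using p0 by simp
  ultimately show "\<mu> * (\<Sum>i\<in>{1..<n}. \<bar>S i\<bar>) + \<bar>(1 - p (n - 1)) * \<delta> * S (n - 1)\<bar> \<le> \<delta> * \<bar>S 0\<bar>"
    using cb by (simp add: mult.commute)
qed

end




fun cc :: "real \<Rightarrow> real \<Rightarrow> (nat \<Rightarrow> real) \<Rightarrow> (nat \<Rightarrow> real) \<Rightarrow> real \<Rightarrow> real \<Rightarrow> nat \<Rightarrow> real" where
  "cc \<delta> \<omega> p \<beta> \<mu> I 0 = 1"
| "cc \<delta> \<omega> p \<beta> \<mu> I (Suc i) = (1 - p i) * \<delta> * cc \<delta> \<omega> p \<beta> \<mu> I i /
      (p (Suc i) * \<omega> + (1 - p (Suc i)) * \<delta> + \<beta> (Suc i) * I + \<mu>)"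

context wi
begin

definition "Dn I = p n * \<omega> + \<beta> n * I + \<mu>"
definition "KK \<delta> I = (\<Sum>i<n. cc \<delta> \<omega> p \<beta> \<mu> I i) + (1 - p (n-1)) * \<delta> * cc \<delta> \<omega> p \<beta> \<mu> I (n-1) / Dn I"
definition "ss \<delta> I = (1 - I - \<mu> / Dn I) / KK \<delta> I"
definition "SS \<delta> I i = (if i < n then ss \<delta> I * cc \<delta> \<omega> p \<beta> \<mu> I i
    else (\<mu> + (1 - p (n-1)) * \<delta> * ss \<delta> I * cc \<delta> \<omega> p \<beta> \<mu> I (n-1)) / Dn I)"
definition "GG \<delta> I = (\<Sum>i\<le>n. \<beta> i * SS \<delta> I i) - r - \<mu>"

lemma den_pos: "0 \<le> \<delta> \<Longrightarrow> 0 \<le> I \<Longrightarrow> 1 \<le> i \<Longrightarrow> i \<le> n \<Longrightarrow> 0 < p i * \<omega> + (1 - p i) * \<delta> + \<beta> i * I + \<mu>"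
proof -
  assume a: "0 \<le> \<delta>" "0 \<le> I" "1 \<le> i" "i \<le> n"
  have "0 \<le> p i * \<omega>" using p_bnd[of i] om a by simp
  moreover have "0 \<le> (1 - p i) * \<delta>" using p_bnd[of i] a by simp
  moreover have "0 \<le> \<beta> i * I" using beta_bnd[of i] a by simp
  ultimately show ?thesis using mupos by linarith
qed

lemma Dn_pos: "0 \<le> I \<Longrightarrow> \<mu> \<le> Dn I"
  using wn_nn beta_bnd[of n] b0 unfolding Dn_def by (simp add: mult_nonneg_nonneg)

lemma cc_nn: "0 \<le> \<delta> \<Longrightarrow> 0 \<le> I \<Longrightarrow> i \<le> n \<Longrightarrow> 0 \<le> cc \<delta> \<omega> p \<beta> \<mu> I i"
proof (induction i)
  case 0 then show ?case by simp
next
  case (Suc i)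
  have "0 \<le> (1 - p i) * \<delta>" using p_bnd[of i] Suc by simp
  moreover have "0 \<le> cc \<delta> \<omega> p \<beta> \<mu> I i" using Suc by simp
  moreover have "0 < p (Suc i) * \<omega> + (1 - p (Suc i)) * \<delta> + \<beta> (Suc i) * I + \<mu>"
    using den_pos[of \<delta> I "Suc i"] Suc by simp
  ultimately show ?case by simp
qed

lemma KK_ge: assumes "0 \<le> \<delta>" "0 \<le> I" shows "1 \<le> KK \<delta> I"
proof -
  have "(\<Sum>i<n. cc \<delta> \<omega> p \<beta> \<mu> I i) = cc \<delta> \<omega> p \<beta> \<mu> I 0 + (\<Sum>i\<in>{1..<n}. cc \<delta> \<omega> p \<beta> \<mu> I i)"
  proof -
    have "{..<n} = insert 0 {1..<n}" using n1 by auto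
    then show ?thesis by simp
  qed
  moreover have "0 \<le> (\<Sum>i\<in>{1..<n}. cc \<delta> \<omega> p \<beta> \<mu> I i)"
    using cc_nn assms by (intro sum_nonneg) auto
  moreover have "0 \<le> (1 - p (n-1)) * \<delta> * cc \<delta> \<omega> p \<beta> \<mu> I (n-1) / Dn I"
    using p_bnd[of "n-1"] assms cc_nn[of \<delta> I "n-1"] Dn_pos[of I] mupos by simp
  ultimately show ?thesis unfolding KK_def by simp
qed

lemma SS_pre: assumes d: "0 \<le> \<delta>" and I: "0 \<le> I" shows "pre_eq n \<delta> \<omega> \<mu> p \<beta> (SS \<delta> I) I"
proof -
  have K: "1 \<le> KK \<delta> I" using KK_ge d I by simp
  have D: "\<mu> \<le> Dn I" using Dn_pos I by simp
  have D0: "Dn I \<noteq> 0" using D mupos by simp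
  define s where "s = ss \<delta> I"
  define c where "c i = cc \<delta> \<omega> p \<beta> \<mu> I i" for i
  have norm: "(\<Sum>i\<le>n. SS \<delta> I i) + I = 1"
  proof -
    have "{..n} = insert n {..<n}" by auto
    then have "(\<Sum>i\<le>n. SS \<delta> I i) = (\<Sum>i<n. SS \<delta> I i) + SS \<delta> I n" by (simp add: add.commute)
    also have "(\<Sum>i<n. SS \<delta> I i) = s * (\<Sum>i<n. c i)"
      unfolding SS_def s_def c_def by (simp add: sum_distrib_left)
    also have "SS \<delta> I n = \<mu> / Dn I + (1 - p (n-1)) * \<delta> * c (n-1) / Dn I * s"
      unfolding SS_def s_def c_def by (simp add: add_divide_distrib)
    finally have "(\<Sum>i\<le>n. SS \<delta> I i) = s * KK \<delta> I + \<mu> / Dn I"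
      unfolding KK_def c_def by (simp add: algebra_simps)
    also have "s * KK \<delta> I = 1 - I - \<mu> / Dn I" unfolding s_def ss_def using K by simp
    finally show ?thesis by simp
  qed
  have chain: "- (p i * \<omega>) * SS \<delta> I i + (1 - p (i - 1)) * \<delta> * SS \<delta> I (i - 1) - (1 - p i) * \<delta> * SS \<delta> I i
        - \<beta> i * I * SS \<delta> I i - \<mu> * SS \<delta> I i = 0" if ii: "1 \<le> i" "i \<le> n - 1" for i
  proof -
    obtain j where j: "i = Suc j" using ii by (cases i) auto
    have dp: "0 < p i * \<omega> + (1 - p i) * \<delta> + \<beta> i * I + \<mu>" using den_pos[of \<delta> I i] ii d I by simp
    have "i < n" "i - 1 < n" using ii n1 by auto
    then have S1: "SS \<delta> I i = s * c i" and S2: "SS \<delta> I (i-1) = s * c j"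
      unfolding SS_def s_def c_def using j by simp_all
    define den where "den = p i * \<omega> + (1 - p i) * \<delta> + \<beta> i * I + \<mu>"
    have ci: "c i = (1 - p j) * \<delta> * c j / den" unfolding c_def den_def j by simp
    have cd: "c i * den = (1 - p j) * \<delta> * c j" unfolding ci using dp unfolding den_def by simp
    have "- (p i * \<omega>) * SS \<delta> I i + (1 - p (i - 1)) * \<delta> * SS \<delta> I (i - 1) - (1 - p i) * \<delta> * SS \<delta> I i
        - \<beta> i * I * SS \<delta> I i - \<mu> * SS \<delta> I i = s * ((1 - p j) * \<delta> * c j - c i * den)"
      unfolding S1 S2 den_def using j by (simp add: algebra_simps)
    also have "\<dots> = 0" using cd by simp
    finally show ?thesis .
  qed
  have last: "\<mu> - p n * \<omega> * SS \<delta> I n + (1 - p (n - 1)) * \<delta> * SS \<delta> I (n - 1) - \<beta> n * I * SS \<delta> I n - \<mu> * SS \<delta> I n = 0"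
  proof -
    have "n - 1 < n" using n1 by simp
    then have "SS \<delta> I (n-1) = s * c (n-1)" unfolding SS_def s_def c_def by simp
    moreover have "SS \<delta> I n * Dn I = \<mu> + (1 - p (n-1)) * \<delta> * s * c (n-1)"
      unfolding SS_def s_def c_def using D0 by simp
    ultimately show ?thesis unfolding Dn_def by (simp add: algebra_simps)
  qed
  show ?thesis unfolding pre_eq_def using norm chain last by blast
qed

end



context wi
begin

lemma s0_eq:
  assumes pe: "pre_eq n \<delta> \<omega> \<mu> p \<beta> S I"
    and ie: "I * (\<Sum>i\<le>n. \<beta> i * S i) - r * I - \<mu> * I = 0"
  shows "wi_equilibrium n \<delta> \<omega> r \<mu> p \<beta> S I"
proof -
  note pe' = pe[unfolded pre_eq_def]
  define g where "g i = (1 - p i) * \<delta> * S i" for i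
  define P where "P = (\<Sum>i\<in>{1..<n}. p i * \<omega> * S i)"
  define Bm where "Bm = (\<Sum>i\<in>{1..<n}. \<beta> i * S i)"
  define Mm where "Mm = (\<Sum>i\<in>{1..<n}. S i)"
  have T0: "(\<Sum>i\<in>{1..<n}. (g (i-1) - g i) - (p i * \<omega> * S i + I * (\<beta> i * S i) + \<mu> * S i)) = 0"
  proof (rule sum.neutral, rule ballI)
    fix i assume "i \<in> {1..<n}"
    then have "1 \<le> i \<and> i \<le> n - 1" by auto
    then have "- (p i * \<omega>) * S i + (1 - p (i - 1)) * \<delta> * S (i - 1) - (1 - p i) * \<delta> * S i
        - \<beta> i * I * S i - \<mu> * S i = 0" using pe' by blast
    then show "(g (i-1) - g i) - (p i * \<omega> * S i + I * (\<beta> i * S i) + \<mu> * S i) = 0"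
      unfolding g_def by (simp add: algebra_simps)
  qed
  have T1: "(\<Sum>i\<in>{1..<n}. (g (i-1) - g i) - (p i * \<omega> * S i + I * (\<beta> i * S i) + \<mu> * S i))
      = (\<Sum>i\<in>{1..<n}. g (i-1) - g i) - (P + I * Bm + \<mu> * Mm)"
    unfolding P_def Bm_def Mm_def by (simp add: sum_subtractf sum.distrib sum_distrib_left)
  have tel: "(\<Sum>i\<in>{1..<n}. g (i-1) - g i) = g 0 - g (n-1)"
    using telescope1[of g "n-1"] n1 by simp
  have T: "g 0 - g (n-1) - (P + I * Bm + \<mu> * Mm) = 0" using T0 T1 tel by simp
  have g0: "g 0 = \<delta> * S 0" unfolding g_def using p0 by simp
  have sp: "(\<Sum>i=1..n. p i * \<omega> * S i) = P + p n * \<omega> * S n" unfolding P_def by (rule sum_split_1n[OF n1])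
  have sb: "(\<Sum>i\<le>n. \<beta> i * S i) = \<beta> 0 * S 0 + Bm + \<beta> n * S n" unfolding Bm_def by (rule sum_split_le[OF n1])
  have sm: "(\<Sum>i\<le>n. S i) = S 0 + Mm + S n" unfolding Mm_def by (rule sum_split_le[OF n1])
  have En: "\<mu> - p n * \<omega> * S n + g (n-1) - \<beta> n * I * S n - \<mu> * S n = 0" using pe' unfolding g_def by simp
  have Nm: "S 0 + Mm + S n + I = 1" using pe' sm by simp
  have EI: "I * (\<beta> 0 * S 0 + Bm + \<beta> n * S n) - r * I - \<mu> * I = 0" using ie sb by simp
  have T': "\<delta> * S 0 - g (n-1) - (P + I * Bm + \<mu> * Mm) = 0" using T g0 by simp
  have Nm': "\<mu> * (S 0 + Mm + S n + I) - \<mu> = 0" using Nm by simp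
  have idt: "P + p n * \<omega> * S n - \<delta> * S 0 + r * I - \<beta> 0 * I * S 0 - \<mu> * S 0
     = - (\<delta> * S 0 - g (n-1) - (P + I * Bm + \<mu> * Mm))
       - (\<mu> - p n * \<omega> * S n + g (n-1) - \<beta> n * I * S n - \<mu> * S n)
       - (I * (\<beta> 0 * S 0 + Bm + \<beta> n * S n) - r * I - \<mu> * I)
       - (\<mu> * (S 0 + Mm + S n + I) - \<mu>)"
    by (simp add: algebra_simps)
  have A0: "P + p n * \<omega> * S n - \<delta> * S 0 + r * I - \<beta> 0 * I * S 0 - \<mu> * S 0 = 0"
    by (simp only: idt T' En EI Nm')
  have E0: "(\<Sum>i=1..n. p i * \<omega> * S i) - \<delta> * S 0 + r * I - \<beta> 0 * I * S 0 - \<mu> * S 0 = 0"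
    using A0 by (simp only: sp)
  show ?thesis unfolding wi_equilibrium_def
    by (insert pe' ie E0, elim conjE, (intro conjI; assumption))
qed

lemma cc_cont: "0 \<le> \<delta> \<Longrightarrow> i \<le> n \<Longrightarrow> continuous_on {0..1} (\<lambda>I. cc \<delta> \<omega> p \<beta> \<mu> I i)"
proof (induction i)
  case 0 then show ?case by simp
next
  case (Suc i)
  have "\<forall>I\<in>{0..1}. p (Suc i) * \<omega> + (1 - p (Suc i)) * \<delta> + \<beta> (Suc i) * I + \<mu> \<noteq> 0"
    using den_pos[of \<delta> _ "Suc i"] Suc.prems by fastforce
  moreover have "continuous_on {0..1} (\<lambda>I. cc \<delta> \<omega> p \<beta> \<mu> I i)" using Suc by simp
  ultimately show ?case by (simp only: cc.simps) (intro continuous_intros; simp)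
qed

lemma GG_cont: assumes d: "0 \<le> \<delta>" shows "continuous_on {0..1} (GG \<delta>)"
proof -
  have Dc: "continuous_on {0..1} Dn" unfolding Dn_def by (intro continuous_intros)
  have Dnz: "\<forall>I\<in>{0..1}. Dn I \<noteq> 0" using Dn_pos mupos by (smt (verit) atLeastAtMost_iff)
  have cci: "continuous_on {0..1} (\<lambda>I. cc \<delta> \<omega> p \<beta> \<mu> I i)" if "i \<le> n" for i using cc_cont d that by simp
  have Kc: "continuous_on {0..1} (KK \<delta>)" unfolding KK_def
    using cci Dc Dnz by (intro continuous_intros) auto
  have Knz: "\<forall>I\<in>{0..1}. KK \<delta> I \<noteq> 0" using KK_ge d by (smt (verit) atLeastAtMost_iff)
  have sc: "continuous_on {0..1} (ss \<delta>)" unfolding ss_def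
    using Kc Knz Dc Dnz by (intro continuous_intros) auto
  have Sc: "continuous_on {0..1} (\<lambda>I. SS \<delta> I i)" if "i \<le> n" for i
  proof (cases "i < n")
    case True then show ?thesis unfolding SS_def using sc cci that by (simp, intro continuous_intros) auto
  next
    case False then show ?thesis unfolding SS_def using sc cci[of "n-1"] Dc Dnz by (simp, intro continuous_intros) auto
  qed
  show ?thesis unfolding GG_def using Sc by (intro continuous_intros) auto
qed

end



context wi
begin

lemma L_bound:
  assumes pe: "pre_eq n \<delta> \<omega> \<mu> p \<beta> S I" and d: "0 \<le> \<delta>" "\<delta> \<le> \<mu>/2" and I: "0 \<le> I" "I \<le> 1"
  shows "\<bar>S 0\<bar> \<le> 2"
    and "\<bar>(\<Sum>i\<le>n. \<beta> i * S i) - (\<beta> 0*(1-I) + (\<beta> n-\<beta> 0)*\<mu>/(p n * \<omega>+\<beta> n*I+\<mu>))\<bar> \<le> 4*\<beta> n*\<delta>/\<mu>"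
proof -
  note ef = eq_facts[OF pe d(1) I(1)]
  have bb: "0 \<le> \<beta> 0" "\<beta> 0 \<le> \<beta> n" using b0 b0n by auto
  note m = macro1[OF bb wn_nn mupos d I ef(1) ef(2) ef(3) ef(4) ef(5)]
  show "\<bar>S 0\<bar> \<le> 2" by (rule m(1))
  show "\<bar>(\<Sum>i\<le>n. \<beta> i * S i) - (\<beta> 0*(1-I) + (\<beta> n-\<beta> 0)*\<mu>/(p n * \<omega>+\<beta> n*I+\<mu>))\<bar> \<le> 4*\<beta> n*\<delta>/\<mu>"
    using m(2) unfolding ef(6) .
qed

lemma endemic_F:
  assumes "wi_endemic_equilibrium n \<delta> \<omega> r \<mu> p \<beta> S I"
  shows "pre_eq n \<delta> \<omega> \<mu> p \<beta> S I" and "(\<Sum>i\<le>n. \<beta> i * S i) = r + \<mu>"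
proof -
  have we: "wi_equilibrium n \<delta> \<omega> r \<mu> p \<beta> S I" and I0: "I \<noteq> 0"
    using assms unfolding wi_endemic_equilibrium_def by auto
  show "pre_eq n \<delta> \<omega> \<mu> p \<beta> S I" using wi_pre[OF we] .
  have "I * (\<Sum>i\<le>n. \<beta> i * S i) - r * I - \<mu> * I = 0" using we unfolding wi_equilibrium_def by blast
  then have "I * ((\<Sum>i\<le>n. \<beta> i * S i) - (r + \<mu>)) = 0" by (simp add: algebra_simps)
  then show "(\<Sum>i\<le>n. \<beta> i * S i) = r + \<mu>" using I0 by simp
qed

lemma thr_id: "\<beta> 0 + (\<beta> n - \<beta> 0)*\<mu>/(p n * \<omega> + \<mu>) = (\<beta> 0 * (p n * \<omega>) + \<beta> n * \<mu>)/(p n * \<omega> + \<mu>)"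
proof -
  have "0 < p n * \<omega> + \<mu>" using wn_nn mupos by linarith
  then show ?thesis by (simp add: field_simps)
qed

lemma nonexist:
  assumes d: "0 \<le> \<delta>" "\<delta> \<le> \<mu>/2"
    and g: "4*\<beta> n*\<delta>/\<mu> < (r + \<mu>) - (\<beta> 0 * (p n * \<omega>) + \<beta> n * \<mu>)/(p n * \<omega> + \<mu>)"
  shows "\<not> (\<exists>S I. wi_endemic_equilibrium n \<delta> \<omega> r \<mu> p \<beta> S I \<and> 0 < I \<and> I \<le> 1)"
proof
  assume "\<exists>S I. wi_endemic_equilibrium n \<delta> \<omega> r \<mu> p \<beta> S I \<and> 0 < I \<and> I \<le> 1"
  then obtain S I where e: "wi_endemic_equilibrium n \<delta> \<omega> r \<mu> p \<beta> S I" and I: "0 < I" "I \<le> 1" by blast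
  note F = endemic_F[OF e]
  have L: "\<bar>(r + \<mu>) - (\<beta> 0*(1-I) + (\<beta> n-\<beta> 0)*\<mu>/(p n * \<omega>+\<beta> n*I+\<mu>))\<bar> \<le> 4*\<beta> n*\<delta>/\<mu>"
    using L_bound(2)[OF F(1) d] I F(2) by simp
  have a: "\<beta> 0*(1-I) \<le> \<beta> 0" using b0 I by (simp add: mult_left_le)
  have b: "(\<beta> n-\<beta> 0)*\<mu>/(p n * \<omega>+\<beta> n*I+\<mu>) \<le> (\<beta> n-\<beta> 0)*\<mu>/(p n * \<omega>+\<mu>)"
  proof (rule divide_left_mono)
    show "0 \<le> (\<beta> n-\<beta> 0)*\<mu>" using b0n mupos by simp
    show "p n * \<omega> + \<mu> \<le> p n * \<omega> + \<beta> n * I + \<mu>" using beta_bnd[of n] I by simp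
    show "0 < (p n * \<omega> + \<beta> n * I + \<mu>) * (p n * \<omega> + \<mu>)"
      using wn_nn mupos beta_bnd[of n] I by (intro mult_pos_pos) (simp_all add: add_nonneg_pos)
  qed
  have "r + \<mu> \<le> \<beta> 0 + (\<beta> n-\<beta> 0)*\<mu>/(p n * \<omega>+\<mu>) + 4*\<beta> n*\<delta>/\<mu>"
    using L a b by linarith
  then show False using g thr_id by linarith
qed

end



context wi
begin

lemma exist:
  assumes d: "0 \<le> \<delta>" "\<delta> \<le> \<mu>/2"
    and g: "4*\<beta> n*\<delta>/\<mu> < (\<beta> 0 * (p n * \<omega>) + \<beta> n * \<mu>)/(p n * \<omega> + \<mu>) - (r + \<mu>)"
    and gr: "4*\<beta> n*\<delta>/\<mu> < r"
  shows "\<exists>S I. wi_endemic_equilibrium n \<delta> \<omega> r \<mu> p \<beta> S I \<and> 0 < I \<and> I \<le> 1"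
proof -
  have pe0: "pre_eq n \<delta> \<omega> \<mu> p \<beta> (SS \<delta> 0) 0" using SS_pre d by simp
  have pe1: "pre_eq n \<delta> \<omega> \<mu> p \<beta> (SS \<delta> 1) 1" using SS_pre d by simp
  have G0: "0 < GG \<delta> 0"
  proof -
    have "\<bar>(\<Sum>i\<le>n. \<beta> i * SS \<delta> 0 i) - (\<beta> 0*(1-0) + (\<beta> n-\<beta> 0)*\<mu>/(p n * \<omega>+\<beta> n*0+\<mu>))\<bar> \<le> 4*\<beta> n*\<delta>/\<mu>"
      using L_bound(2)[OF pe0 d] by simp
    then have "(\<Sum>i\<le>n. \<beta> i * SS \<delta> 0 i) \<ge> (\<beta> 0 * (p n * \<omega>) + \<beta> n * \<mu>)/(p n * \<omega> + \<mu>) - 4*\<beta> n*\<delta>/\<mu>"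
      using thr_id by (simp add: abs_le_iff)
    then show ?thesis unfolding GG_def using g by linarith
  qed
  have G1: "GG \<delta> 1 < 0"
  proof -
    have "\<bar>(\<Sum>i\<le>n. \<beta> i * SS \<delta> 1 i) - (\<beta> 0*(1-1) + (\<beta> n-\<beta> 0)*\<mu>/(p n * \<omega>+\<beta> n*1+\<mu>))\<bar> \<le> 4*\<beta> n*\<delta>/\<mu>"
      using L_bound(2)[OF pe1 d] by simp
    moreover have "(\<beta> n-\<beta> 0)*\<mu>/(p n * \<omega>+\<beta> n*1+\<mu>) \<le> \<mu>"
    proof -
      have pos: "0 < p n * \<omega>+\<beta> n*1+\<mu>" using wn_nn mupos beta_bnd[of n] by simp
      have "(\<beta> n-\<beta> 0)*\<mu> \<le> (p n * \<omega>+\<beta> n*1+\<mu>)*\<mu>"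
        using wn_nn mupos b0 by (intro mult_right_mono) auto
      then show ?thesis using pos by (simp add: divide_le_eq mult.commute)
    qed
    ultimately have "(\<Sum>i\<le>n. \<beta> i * SS \<delta> 1 i) \<le> \<mu> + 4*\<beta> n*\<delta>/\<mu>" by (simp add: abs_le_iff)
    then show ?thesis unfolding GG_def using gr by linarith
  qed
  obtain x where x: "0 \<le> x" "x \<le> 1" "GG \<delta> x = 0"
    using IVT2'[of "GG \<delta>" 1 0 0] G0 G1 GG_cont[OF d(1)] by auto
  have x0: "x \<noteq> 0" using x G0 by auto
  have ie: "x * (\<Sum>i\<le>n. \<beta> i * SS \<delta> x i) - r * x - \<mu> * x = 0"
  proof -
    have "x * (\<Sum>i\<le>n. \<beta> i * SS \<delta> x i) - r * x - \<mu> * x = x * GG \<delta> x"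
      unfolding GG_def by (simp add: algebra_simps)
    then show ?thesis using x by simp
  qed
  have "wi_equilibrium n \<delta> \<omega> r \<mu> p \<beta> (SS \<delta> x) x" by (rule s0_eq[OF SS_pre[OF d(1) x(1)] ie])
  then show ?thesis unfolding wi_endemic_equilibrium_def using x x0 by force
qed

end



context wi
begin

lemma diff_chain:
  assumes pe: "pre_eq n \<delta> \<omega> \<mu> p \<beta> S I" and pe2: "pre_eq n \<delta> \<omega> \<mu> p \<beta> S' I'"
    and d: "0 \<le> \<delta>" and I: "0 \<le> I" "0 \<le> I'"
  shows "\<mu> * (\<Sum>i\<in>{1..<n}. \<bar>S' i - S i\<bar>) + \<bar>(1 - p (n-1)) * \<delta> * S' (n-1) - (1 - p (n-1)) * \<delta> * S (n-1)\<bar>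
     \<le> \<delta> * \<bar>S' 0 - S 0\<bar> + \<beta> n * \<bar>I' - I\<bar> * (\<Sum>i\<in>{1..<n}. \<bar>S' i\<bar>)"
proof -
  note p1 = pe[unfolded pre_eq_def] and p2 = pe2[unfolded pre_eq_def]
  define a where "a i = (1 - p i) * \<delta>" for i
  define x where "x i = S' i - S i" for i
  define y where "y i = \<beta> n * \<bar>I' - I\<bar> * \<bar>S' i\<bar>" for i
  have step: "(a i + \<mu>) * \<bar>x i\<bar> \<le> a (i-1) * \<bar>x (i-1)\<bar> + y i" if ii: "1 \<le> i" "i \<le> n - 1" for i
  proof -
    define den where "den = p i * \<omega> + a i + \<beta> i * I + \<mu>"
    have ch1: "den * S i = a (i-1) * S (i-1)"
      using p1 ii unfolding a_def den_def by (auto simp: algebra_simps)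
    have ch2: "(p i * \<omega> + a i + \<beta> i * I' + \<mu>) * S' i = a (i-1) * S' (i-1)"
      using p2 ii unfolding a_def by (auto simp: algebra_simps)
    have ch: "den * x i = a (i-1) * x (i-1) - \<beta> i * (I' - I) * S' i"
      using ch1 ch2 unfolding x_def den_def by (simp add: algebra_simps)
    have pi: "0 \<le> p i" "p i \<le> 1" "0 \<le> p (i-1)" "p (i-1) \<le> 1" using p_bnd[of i] p_bnd[of "i-1"] ii by auto
    have bi: "0 \<le> \<beta> i" "\<beta> i \<le> \<beta> n" using beta_bnd[of i] ii by auto
    have c1: "0 \<le> p i * \<omega>" using pi om by simp
    have c2: "0 \<le> \<beta> i * I" using bi I by simp
    have ai: "0 \<le> a i" "0 \<le> a (i-1)" using pi d unfolding a_def by auto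
    have "(a i + \<mu>) * \<bar>x i\<bar> \<le> den * \<bar>x i\<bar>"
      unfolding den_def using c1 c2 by (intro mult_right_mono) auto
    also have "\<dots> = \<bar>den * x i\<bar>" unfolding den_def using c1 c2 ai mupos by (simp add: abs_mult)
    also have "\<dots> \<le> \<bar>a (i-1) * x (i-1)\<bar> + \<bar>\<beta> i * (I' - I) * S' i\<bar>" unfolding ch by (rule abs_triangle_ineq4)
    also have "\<bar>a (i-1) * x (i-1)\<bar> = a (i-1) * \<bar>x (i-1)\<bar>" using ai by (simp add: abs_mult)
    also have "\<bar>\<beta> i * (I' - I) * S' i\<bar> \<le> y i"
    proof -
      have "\<bar>\<beta> i * (I' - I) * S' i\<bar> = \<beta> i * (\<bar>I' - I\<bar> * \<bar>S' i\<bar>)" using bi by (simp add: abs_mult)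
      also have "\<dots> \<le> \<beta> n * (\<bar>I' - I\<bar> * \<bar>S' i\<bar>)" using bi by (intro mult_right_mono) auto
      finally show ?thesis unfolding y_def by (simp add: mult.assoc)
    qed
    finally show ?thesis by simp
  qed
  have cb: "\<mu> * (\<Sum>i=1..n-1. \<bar>x i\<bar>) + a (n-1) * \<bar>x (n-1)\<bar> \<le> a 0 * \<bar>x 0\<bar> + (\<Sum>i=1..n-1. y i)"
    by (rule chain_bound) (use step in auto)
  have e: "{1..n-1} = {1..<n}" using n1 by auto
  have f1: "a (n-1) * \<bar>x (n-1)\<bar> = \<bar>(1 - p (n-1)) * \<delta> * S' (n-1) - (1 - p (n-1)) * \<delta> * S (n-1)\<bar>"
  proof -
    have "0 \<le> a (n-1)" using p_bnd[of "n-1"] d unfolding a_def by simp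
    then have "a (n-1) * \<bar>x (n-1)\<bar> = \<bar>a (n-1) * x (n-1)\<bar>" by (simp add: abs_mult)
    then show ?thesis unfolding a_def x_def by (simp add: algebra_simps)
  qed
  have f2: "a 0 = \<delta>" unfolding a_def using p0 by simp
  have f3: "(\<Sum>i\<in>{1..<n}. y i) = \<beta> n * \<bar>I' - I\<bar> * (\<Sum>i\<in>{1..<n}. \<bar>S' i\<bar>)"
    unfolding y_def by (simp add: sum_distrib_left)
  have cb2: "\<mu> * (\<Sum>i\<in>{1..<n}. \<bar>x i\<bar>) + a (n-1) * \<bar>x (n-1)\<bar> \<le> a 0 * \<bar>x 0\<bar> + (\<Sum>i\<in>{1..<n}. y i)"
    using cb unfolding e .
  from cb2 show ?thesis unfolding f1 f2 f3 unfolding x_def .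
qed

lemma unique:
  assumes d: "0 \<le> \<delta>" "\<delta> \<le> \<mu>/4"
    and SM: "\<delta> * (2*(\<mu>*\<beta> n + 2*(p n * \<omega>+\<beta> n+\<mu>)*\<beta> n)*(4*\<beta> n+\<mu>))
       < ((\<beta> n-\<beta> 0)*\<beta> n*\<mu>/(2*(p n * \<omega>+\<beta> n+\<mu>)) + \<mu>*\<beta> 0)*\<mu>^2"
    and e1: "wi_endemic_equilibrium n \<delta> \<omega> r \<mu> p \<beta> S I" "0 < I" "I \<le> 1"
    and e2: "wi_endemic_equilibrium n \<delta> \<omega> r \<mu> p \<beta> S' I'" "0 < I'" "I' \<le> 1"
  shows "I' = I \<and> (\<forall>i\<le>n. S' i = S i)"
proof -
  have d2: "\<delta> \<le> \<mu>/2" using d mupos by simp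
  note F1 = endemic_F[OF e1(1)] and F2 = endemic_F[OF e2(1)]
  note ef1 = eq_facts[OF F1(1) d(1)] and ef2 = eq_facts[OF F2(1) d(1)]
  have I0: "0 \<le> I" "0 \<le> I'" using e1 e2 by auto
  note ef1 = ef1[OF I0(1)] and ef2 = ef2[OF I0(2)]
  have s1: "\<bar>S 0\<bar> \<le> 2" using L_bound(1)[OF F1(1) d(1) d2] e1 by simp
  have s2: "\<bar>S' 0\<bar> \<le> 2" using L_bound(1)[OF F2(1) d(1) d2] e2 by simp
  define Z where "Z = (\<Sum>i\<in>{1..<n}. \<bar>S' i - S i\<bar>)"
  define W where "W = \<bar>(1 - p (n-1)) * \<delta> * S' (n-1) - (1 - p (n-1)) * \<delta> * S (n-1)\<bar>"
  have DC: "\<mu> * Z + W \<le> \<delta> * \<bar>S' 0 - S 0\<bar> + \<beta> n * \<bar>I' - I\<bar> * (\<Sum>i\<in>{1..<n}. \<bar>S' i\<bar>)"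
    unfolding Z_def W_def by (rule diff_chain[OF F1(1) F2(1) d(1) I0])
  have DM: "\<bar>(\<Sum>i\<in>{1..<n}. S' i) - (\<Sum>i\<in>{1..<n}. S i)\<bar> \<le> Z"
    unfolding Z_def sum_subtractf[symmetric] by (rule sum_abs)
  have DE1: "\<bar>(\<Sum>i\<in>{1..<n}. \<beta> i * S' i) - (\<Sum>i\<in>{1..<n}. \<beta> i * S i)\<bar> \<le> \<beta> n * Z"
  proof -
    have "\<bar>(\<Sum>i\<in>{1..<n}. \<beta> i * S' i) - (\<Sum>i\<in>{1..<n}. \<beta> i * S i)\<bar> = \<bar>\<Sum>i\<in>{1..<n}. \<beta> i * (S' i - S i)\<bar>"
      by (simp add: sum_subtractf[symmetric] algebra_simps)
    also have "\<dots> \<le> (\<Sum>i\<in>{1..<n}. \<bar>\<beta> i * (S' i - S i)\<bar>)" by (rule sum_abs)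
    also have "\<dots> \<le> (\<Sum>i\<in>{1..<n}. \<beta> n * \<bar>S' i - S i\<bar>)"
    proof (rule sum_mono)
      fix i assume "i \<in> {1..<n}"
      then have "0 \<le> \<beta> i" "\<beta> i \<le> \<beta> n" using beta_bnd[of i] by auto
      then show "\<bar>\<beta> i * (S' i - S i)\<bar> \<le> \<beta> n * \<bar>S' i - S i\<bar>" by (simp add: abs_mult mult_right_mono)
    qed
    finally show ?thesis unfolding Z_def by (simp add: sum_distrib_left)
  qed
  have Z0: "0 \<le> Z" unfolding Z_def by (simp add: sum_nonneg)
  have W0: "0 \<le> W" unfolding W_def by simp
  have A0: "0 \<le> (\<Sum>i\<in>{1..<n}. \<bar>S i\<bar>)" "0 \<le> (\<Sum>i\<in>{1..<n}. \<bar>S' i\<bar>)" by (simp_all add: sum_nonneg)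
  have FF1: "\<beta> 0 * S 0 + (\<Sum>i\<in>{1..<n}. \<beta> i * S i) + \<beta> n * S n = r + \<mu>" using ef1(6) F1(2) by simp
  have FF2: "\<beta> 0 * S' 0 + (\<Sum>i\<in>{1..<n}. \<beta> i * S' i) + \<beta> n * S' n = r + \<mu>" using ef2(6) F2(2) by simp
  have hh: "0 \<le> \<beta> 0" "\<beta> 0 < \<beta> n" "0 \<le> p n * \<omega>" "0 < \<mu>" "0 \<le> \<delta>" "\<delta> \<le> \<mu>/4"
      "0 \<le> I" "I \<le> 1" "0 \<le> I'" "I' \<le> 1" using b0 b0n wn_nn mupos d e1 e2 by auto
  have DE2: "\<bar>(1 - p (n-1)) * \<delta> * S' (n-1) - (1 - p (n-1)) * \<delta> * S (n-1)\<bar> \<le> W" unfolding W_def by simp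
  have res: "I' = I \<and> Z = 0 \<and> S' n = S n \<and> S' 0 = S 0"
    by (rule macro2[OF hh ef1(1) ef2(1) ef1(2) ef2(2) FF1 FF2 s1 s2 ef1(5) ef2(5) A0 DM DE1 DE2 DC Z0 W0 SM])
  have mid: "S' i = S i" if "i \<in> {1..<n}" for i
  proof -
    have "\<forall>i\<in>{1..<n}. \<bar>S' i - S i\<bar> = 0" using res Z_def sum_nonneg_eq_0_iff[of "{1..<n}" "\<lambda>i. \<bar>S' i - S i\<bar>"] by simp
    then show ?thesis using that by simp
  qed
  have "\<forall>i\<le>n. S' i = S i"
  proof (intro allI impI)
    fix i assume "i \<le> n"
    then consider "i = 0" | "i = n" | "i \<in> {1..<n}" by force
    then show "S' i = S i" using res mid by cases auto
  qed
  then show ?thesis using res by simp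
qed

end



lemma small_ex:
  fixes c K :: real
  assumes "0 < c" "0 \<le> K"
  shows "\<exists>d>0. \<forall>\<delta>. 0 \<le> \<delta> \<and> \<delta> \<le> d \<longrightarrow> \<delta> * K < c"
proof (intro exI[of _ "c/(K+1)"] conjI allI impI)
  show "0 < c/(K+1)" using assms by simp
  fix \<delta> assume a: "0 \<le> \<delta> \<and> \<delta> \<le> c/(K+1)"
  have "\<delta> * K \<le> c/(K+1) * K" using a assms by (intro mult_right_mono) auto
  also have "\<dots> < c"
  proof -
    have "c * K < c * (K+1)" using assms by simp
    then show ?thesis using assms by (simp add: divide_less_eq mult.commute)
  qed
  finally show "\<delta> * K < c" .
qed

theorem theorem3:
  fixes n :: nat and \<omega> r \<mu> :: real and p \<beta> :: "nat \<Rightarrow> real"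
  assumes "n \<ge> 1" and "\<omega> \<ge> 0" and "r > 0" and "\<mu> > 0"
    and "p 0 = 0" and "\<forall>i\<in>{1..n}. 0 \<le> p i \<and> p i \<le> 1"
    and "0 \<le> \<beta> 0" and "\<forall>i<n. \<beta> i \<le> \<beta> (Suc i)" and "\<beta> 0 < \<beta> n"
  shows "\<exists>\<delta>o>0. \<forall>\<delta>. 0 \<le> \<delta> \<and> \<delta> \<le> \<delta>o \<longrightarrow>
    ((p n * \<omega> + \<mu>) * (\<mu> + r) > \<beta> 0 * (p n * \<omega>) + \<beta> n * \<mu> \<longrightarrow>
       \<not> (\<exists>S I. wi_endemic_equilibrium n \<delta> \<omega> r \<mu> p \<beta> S I \<and> 0 < I \<and> I \<le> 1)) \<and>
    ((p n * \<omega> + \<mu>) * (\<mu> + r) < \<beta> 0 * (p n * \<omega>) + \<beta> n * \<mu> \<longrightarrow>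
       (\<exists>S I. wi_endemic_equilibrium n \<delta> \<omega> r \<mu> p \<beta> S I \<and> 0 < I \<and> I \<le> 1 \<and>
          (\<forall>S' I'. wi_endemic_equilibrium n \<delta> \<omega> r \<mu> p \<beta> S' I' \<and> 0 < I' \<and> I' \<le> 1
             \<longrightarrow> I' = I \<and> (\<forall>i\<le>n. S' i = S i))))"
proof -
  interpret wi n \<omega> r \<mu> p \<beta> using assms by (unfold_locales) auto
  define B where "B = \<beta> n"
  define wn where "wn = p n * \<omega>"
  define K2 where "K2 = 2*(\<mu>*B + 2*(wn+B+\<mu>)*B)*(4*B+\<mu>)"
  define c1 where "c1 = ((B-\<beta> 0)*B*\<mu>/(2*(wn+B+\<mu>)) + \<mu>*\<beta> 0)*\<mu>^2"
  define gap where "gap = (r + \<mu>) - (\<beta> 0 * wn + B * \<mu>)/(wn + \<mu>)"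
  define g' where "g' = (if gap = 0 then 1 else \<bar>gap\<bar>)"
  have wn0: "0 \<le> wn" unfolding wn_def by (rule wn_nn)
  have B0: "0 < B" using b0 b0n unfolding B_def by linarith
  have K20: "0 \<le> K2" unfolding K2_def using B0 wn0 mupos by simp
  have c10: "0 < c1"
  proof -
    have "0 < (B-\<beta> 0)*B*\<mu>/(2*(wn+B+\<mu>))" using b0n B0 wn0 mupos unfolding B_def by simp
    moreover have "0 \<le> \<mu>*\<beta> 0" using mupos b0 by simp
    ultimately show ?thesis unfolding c1_def using mupos by simp
  qed
  have g'0: "0 < g'" unfolding g'_def by simp
  have K30: "0 \<le> 4*B/\<mu>" using B0 mupos by simp
  obtain d1 where d1: "d1 > 0" "\<forall>\<delta>. 0 \<le> \<delta> \<and> \<delta> \<le> d1 \<longrightarrow> \<delta> * K2 < c1" using small_ex[OF c10 K20] by blast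
  obtain d2 where d2: "d2 > 0" "\<forall>\<delta>. 0 \<le> \<delta> \<and> \<delta> \<le> d2 \<longrightarrow> \<delta> * (4*B/\<mu>) < r" using small_ex[OF rpos K30] by blast
  obtain d3 where d3: "d3 > 0" "\<forall>\<delta>. 0 \<le> \<delta> \<and> \<delta> \<le> d3 \<longrightarrow> \<delta> * (4*B/\<mu>) < g'" using small_ex[OF g'0 K30] by blast
  define \<delta>o where "\<delta>o = min (\<mu>/4) (min d1 (min d2 d3))"
  have wm: "0 < wn + \<mu>" using wn0 mupos by simp
  show ?thesis
  proof (intro exI[of _ \<delta>o] conjI allI impI)
    show "0 < \<delta>o" unfolding \<delta>o_def using mupos d1 d2 d3 by simp
    fix \<delta> assume "0 \<le> \<delta> \<and> \<delta> \<le> \<delta>o"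
    then have dd: "0 \<le> \<delta>" "\<delta> \<le> \<mu>/4" "\<delta> \<le> d1" "\<delta> \<le> d2" "\<delta> \<le> d3" unfolding \<delta>o_def by auto
    have dm2: "\<delta> \<le> \<mu>/2" using dd mupos by simp
    have e4: "4*\<beta> n*\<delta>/\<mu> = \<delta> * (4*B/\<mu>)" unfolding B_def by simp
    have t3: "4*\<beta> n*\<delta>/\<mu> < g'" using d3 dd unfolding e4 by simp
    {
      assume c: "(p n * \<omega> + \<mu>) * (\<mu> + r) > \<beta> 0 * (p n * \<omega>) + \<beta> n * \<mu>"
      then have "(\<beta> 0 * wn + B * \<mu>)/(wn + \<mu>) < r + \<mu>" unfolding wn_def B_def using wm
        by (simp add: divide_less_eq algebra_simps wn_def)
      then have gp: "0 < gap" unfolding gap_def by simp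
      then have "g' = gap" unfolding g'_def by simp
      then show "\<not> (\<exists>S I. wi_endemic_equilibrium n \<delta> \<omega> r \<mu> p \<beta> S I \<and> 0 < I \<and> I \<le> 1)"
        using nonexist[OF dd(1) dm2] t3 unfolding gap_def wn_def B_def by simp
    }
    {
      assume c: "(p n * \<omega> + \<mu>) * (\<mu> + r) < \<beta> 0 * (p n * \<omega>) + \<beta> n * \<mu>"
      then have "r + \<mu> < (\<beta> 0 * wn + B * \<mu>)/(wn + \<mu>)" unfolding wn_def B_def using wm
        by (simp add: less_divide_eq algebra_simps wn_def)
      then have gp: "gap < 0" unfolding gap_def by simp
      then have "g' = - gap" unfolding g'_def by simp
      then have t3': "4*\<beta> n*\<delta>/\<mu> < (\<beta> 0 * (p n * \<omega>) + \<beta> n * \<mu>)/(p n * \<omega> + \<mu>) - (r + \<mu>)"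
        using t3 unfolding gap_def wn_def B_def by simp
      have t2: "4*\<beta> n*\<delta>/\<mu> < r" using d2 dd unfolding e4 by simp
      obtain S I where SI: "wi_endemic_equilibrium n \<delta> \<omega> r \<mu> p \<beta> S I" "0 < I" "I \<le> 1"
        using exist[OF dd(1) dm2 t3' t2] by blast
      have SM: "\<delta> * (2*(\<mu>*\<beta> n + 2*(p n * \<omega>+\<beta> n+\<mu>)*\<beta> n)*(4*\<beta> n+\<mu>))
         < ((\<beta> n-\<beta> 0)*\<beta> n*\<mu>/(2*(p n * \<omega>+\<beta> n+\<mu>)) + \<mu>*\<beta> 0)*\<mu>^2"
        using d1 dd unfolding K2_def c1_def B_def wn_def by simp
      show "\<exists>S I. wi_endemic_equilibrium n \<delta> \<omega> r \<mu> p \<beta> S I \<and> 0 < I \<and> I \<le> 1 \<and>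
          (\<forall>S' I'. wi_endemic_equilibrium n \<delta> \<omega> r \<mu> p \<beta> S' I' \<and> 0 < I' \<and> I' \<le> 1
             \<longrightarrow> I' = I \<and> (\<forall>i\<le>n. S' i = S i))"
        using SI unique[OF dd(1) dd(2) SM SI] by blast
    }
  qed
qed


end
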